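(* Let $G$ be an optimal digraph on $n$ vertices with $\beta_G > \alpha_G$, and let $\gamma_G = 4(\alpha_G+\beta_G) - 3n$. Then $-1 \leq \gamma_G \leq 1$. Furthermore, $\gamma_G = -1$ if some vertex is incident with a longest edge and with no shortest non-edge, and $\gamma_G = 1$ if some vertex is incident with a shortest non-edge and with no longest edge.
   Context: Digraphs are finite, loopless, with at most one edge $uv$ per ordered pair. A digraph is $2$-free if no distinct $u,v$ have both $uv,vu$ as edges. A circular interval digraph is a digraph together with a fixed arrangement of its vertices in a circle such that for all distinct $u,v,w$ in clockwise order with $uw\in E(G)$, also $uv,vw\in E(G)$. For distinct $u,v$, $d(u,v) = 1 + |\{w: u,w,v \text{ distinct, in clockwise order}\}|$; this is the length of the ordered pair $uv$. A non-edge is an ordered pair $(u,v)$ of distinct vertices with neither $uv$ nor $vu$ an edge; its length is $d(u,v)$. $\alpha_G$ is the minimum length of a non-edge ($\infty$ if none) and $\beta_G$ the maximum length of an edge ($0$ if none). A longest edge is an edge of length $\beta_G$; a shortest non-edge is a non-edge of length $\alpha_G$. A vertex $x$ is incident with a pair $(u,v)$ if $x\in\{u,v\}$. $\xi(G)$ is the number of pairs $(uv,(w,x))$ with $uv\in E(G)$, $(w,x)$ a non-edge, $d(u,v)>d(w,x)$. $\tilde P_3(G)$ is the number of triples $(a,b,c)$ of distinct vertices with $ab,bc\in E(G)$ and $ac,ca\notin E(G)$. For fixed $n\ge 4$, $G$ is optimal if it is a $2$-free circular interval digraph on $n$ vertices maximizing $\tilde P_3$ among all such digraphs and, subject to this,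 minimizing $\xi(G)$. *)

theory Defs
  imports Main "HOL-Library.Extended_Nat"
begin

text \<open>Vertices of a digraph on n vertices are 0,...,n-1, arranged clockwise in
this order around the circle. A digraph is given by its edge set of ordered pairs.\<close>

definition cdist :: "nat \<Rightarrow> nat \<Rightarrow> nat \<Rightarrow> nat" where
  "cdist n u v = (v + n - u) mod n"

definition clockwise :: "nat \<Rightarrow> nat \<Rightarrow> nat \<Rightarrow> nat \<Rightarrow> bool" where
  "clockwise n u v w \<longleftrightarrow> u \<noteq> v \<and> v \<noteq> w \<and> u \<noteq> w \<and> cdist n u v < cdist n u w"

definition is_digraph :: "nat \<Rightarrow> (nat \<times> nat) set \<Rightarrow> bool" where
  "is_digraph n E \<longleftrightarrow> E \<subseteq> {..<n} \<times> {..<n} \<and> (\<forall>u. (u, u) \<notin> E)"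

definition two_free :: "(nat \<times> nat) set \<Rightarrow> bool" where
  "two_free E \<longleftrightarrow> (\<forall>u v. u \<noteq> v \<longrightarrow> \<not> ((u, v) \<in> E \<and> (v, u) \<in> E))"

definition circ_interval :: "nat \<Rightarrow> (nat \<times> nat) set \<Rightarrow> bool" where
  "circ_interval n E \<longleftrightarrow> is_digraph n E \<and>
     (\<forall>u<n. \<forall>v<n. \<forall>w<n. clockwise n u v w \<and> (u, w) \<in> E \<longrightarrow> (u, v) \<in> E \<and> (v, w) \<in> E)"

definition admissible :: "nat \<Rightarrow> (nat \<times> nat) set \<Rightarrow> bool" where
  "admissible n E \<longleftrightarrow> circ_interval n E \<and> two_free E"

definition nonedges :: "nat \<Rightarrow> (nat \<times> nat) set \<Rightarrow> (nat \<times> nat) set" where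
  "nonedges n E = {(u, v). u < n \<and> v < n \<and> u \<noteq> v \<and> (u, v) \<notin> E \<and> (v, u) \<notin> E}"

definition plen :: "nat \<Rightarrow> nat \<times> nat \<Rightarrow> nat" where
  "plen n p = cdist n (fst p) (snd p)"

definition alphaG :: "nat \<Rightarrow> (nat \<times> nat) set \<Rightarrow> enat" where
  "alphaG n E = (if nonedges n E = {} then \<infinity> else enat (Min (plen n ` nonedges n E)))"

definition betaG :: "nat \<Rightarrow> (nat \<times> nat) set \<Rightarrow> nat" where
  "betaG n E = (if E = {} then 0 else Max (plen n ` E))"

definition xi :: "nat \<Rightarrow> (nat \<times> nat) set \<Rightarrow> nat" where
  "xi n E = card {(e, f). e \<in> E \<and> f \<in> nonedges n E \<and> plen n e > plen n f}"

definition P3t :: "nat \<Rightarrow> (nat \<times> nat) set \<Rightarrow> nat" where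
  "P3t n E = card {(a, b, c). a < n \<and> b < n \<and> c < n \<and> a \<noteq> b \<and> b \<noteq> c \<and> a \<noteq> c \<and>
      (a, b) \<in> E \<and> (b, c) \<in> E \<and> (a, c) \<notin> E \<and> (c, a) \<notin> E}"

definition optimal :: "nat \<Rightarrow> (nat \<times> nat) set \<Rightarrow> bool" where
  "optimal n E \<longleftrightarrow> admissible n E \<and>
     (\<forall>E'. admissible n E' \<longrightarrow> P3t n E' \<le> P3t n E) \<and>
     (\<forall>E'. admissible n E' \<and> P3t n E' = P3t n E \<longrightarrow> xi n E \<le> xi n E')"

definition incident :: "nat \<Rightarrow> nat \<times> nat \<Rightarrow> bool" where
  "incident x p \<longleftrightarrow> x = fst p \<or> x = snd p"

definition longest_edge :: "nat \<Rightarrow> (nat \<times> nat) set \<Rightarrow> nat \<times> nat \<Rightarrow> bool" where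
  "longest_edge n E p \<longleftrightarrow> p \<in> E \<and> plen n p = betaG n E"

definition shortest_nonedge :: "nat \<Rightarrow> (nat \<times> nat) set \<Rightarrow> nat \<times> nat \<Rightarrow> bool" where
  "shortest_nonedge n E p \<longleftrightarrow> p \<in> nonedges n E \<and> enat (plen n p) = alphaG n E"

end

theory Submission
  imports Defs
begin



lemma cd_expl: "u < n \<Longrightarrow> v < n \<Longrightarrow> cdist n u v = (if u \<le> v then v - u else v + n - u)"
proof -
  assume a: "u<n" "v<n"
  show ?thesis
  proof (cases "u \<le> v")
    case True
    then have "v + n - u = (v - u) + n" by auto
    then have "(v + n - u) mod n = (v - u) mod n" by (simp only: mod_add_self2)
    also have "\<dots> = v - u" using a by (simp add: less_imp_diff_less)
    finally have "(v + n - u) mod n = v - u" .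
    then show ?thesis using True a unfolding cdist_def by simp
  next
    case False
    then show ?thesis using a unfolding cdist_def by auto
  qed
qed

lemma cw_add: "u < n \<Longrightarrow> v < n \<Longrightarrow> w < n \<Longrightarrow> clockwise n u v w \<Longrightarrow>
   cdist n u v + cdist n v w = cdist n u w"
  unfolding clockwise_def by (auto simp: cd_expl split: if_splits)

lemma cw_rot: "u < n \<Longrightarrow> v < n \<Longrightarrow> w < n \<Longrightarrow> clockwise n u v w \<Longrightarrow> clockwise n v w u"
  unfolding clockwise_def by (auto simp: cd_expl split: if_splits)

lemma cd_pos: "u < n \<Longrightarrow> v < n \<Longrightarrow> u \<noteq> v \<Longrightarrow> 0 < cdist n u v"
  by (auto simp: cd_expl)
lemma cd_lt: "u < n \<Longrightarrow> v < n \<Longrightarrow> cdist n u v < n"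
  by (auto simp: cd_expl)
lemma cd_self: "cdist n u u = 0" by (simp add: cdist_def)
lemma cd_sym: "u < n \<Longrightarrow> v < n \<Longrightarrow> u \<noteq> v \<Longrightarrow> cdist n u v + cdist n v u = n"
  by (auto simp: cd_expl)
lemma cd_inj: "u < n \<Longrightarrow> v < n \<Longrightarrow> w < n \<Longrightarrow> cdist n u v = cdist n u w \<Longrightarrow> v = w"
  by (auto simp: cd_expl split: if_splits)
lemma cd_shift: "u < n \<Longrightarrow> k < n \<Longrightarrow> cdist n u ((u + k) mod n) = k \<and> (u+k) mod n < n"
proof -
  assume a: "u<n" "k<n"
  show ?thesis
  proof (cases "u + k < n")
    case True then show ?thesis using a by (auto simp: cd_expl)
  next
    case False
    then have "(u+k) mod n = u + k - n" using a
      by (simp add: le_mod_geq)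
    then show ?thesis using a False by (auto simp: cd_expl)
  qed
qed

lemma card_dist: assumes "x < n"
  shows "card {z. z < n \<and> P (cdist n x z)} = card {k. k < n \<and> P k}"
proof -
  have "bij_betw (cdist n x) {z. z < n \<and> P (cdist n x z)} {k. k < n \<and> P k}"
    unfolding bij_betw_def
  proof
    show "inj_on (cdist n x) {z. z < n \<and> P (cdist n x z)}"
      using assms by (auto intro!: inj_onI dest: cd_inj)
    show "cdist n x ` {z. z < n \<and> P (cdist n x z)} = {k. k < n \<and> P k}"
    proof
      show "cdist n x ` {z. z < n \<and> P (cdist n x z)} \<subseteq> {k. k < n \<and> P k}"
        using assms cd_lt by auto
      show "{k. k < n \<and> P k} \<subseteq> cdist n x ` {z. z < n \<and> P (cdist n x z)}"
      proof
        fix k assume "k \<in> {k. k < n \<and> P k}"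
        then have k: "k<n" "P k" by auto
        have "cdist n x ((x + k) mod n) = k" "(x+k) mod n < n" using cd_shift[OF assms k(1)] by auto
        then show "k \<in> cdist n x ` {z. z < n \<and> P (cdist n x z)}"
          using k by (metis (mono_tags, lifting) image_eqI mem_Collect_eq)
      qed
    qed
  qed
  then show ?thesis by (rule bij_betw_same_card)
qed

lemma card_range1: "m \<le> n \<Longrightarrow> card {k. k < n \<and> 0 < k \<and> k < m} = m - 1"
proof -
  assume "m \<le> n"
  then have "{k. k < n \<and> 0 < k \<and> k < m} = {1..<m}" by auto
  then show ?thesis by simp
qed
lemma card_range2: "m < n \<Longrightarrow> card {k. k < n \<and> 0 < k \<and> k \<le> m} = m"
proof -
  assume "m < n"
  then have "{k. k < n \<and> 0 < k \<and> k \<le> m} = {1..m}" by auto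
  then show ?thesis by simp
qed

definition P3S :: "nat \<Rightarrow> (nat \<times> nat) set \<Rightarrow> (nat \<times> nat \<times> nat) set" where
  "P3S n E = {(a, b, c). a < n \<and> b < n \<and> c < n \<and> a \<noteq> b \<and> b \<noteq> c \<and> a \<noteq> c \<and>
      (a, b) \<in> E \<and> (b, c) \<in> E \<and> (a, c) \<notin> E \<and> (c, a) \<notin> E}"

lemma P3t_card: "P3t n E = card (P3S n E)" unfolding P3t_def P3S_def by simp

lemma P3S_fin: "finite (P3S n E)"
proof -
  have "P3S n E \<subseteq> {..<n} \<times> {..<n} \<times> {..<n}" unfolding P3S_def by auto
  then show ?thesis by (rule finite_subset) auto
qed

lemma card_change:
  assumes "P3S n E - P3S n E' \<subseteq> L" "G \<subseteq> P3S n E' - P3S n E" "finite L"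
  shows "int (card (P3S n E')) \<ge> int (card (P3S n E)) - int (card L) + int (card G)"
proof -
  let ?S = "P3S n E" and ?T = "P3S n E'"
  have fS: "finite ?S" "finite ?T" by (auto simp: P3S_fin)
  have "card ?S \<le> card (?S \<inter> ?T) + card (?S - ?T)"
    using fS by (metis card_Un_le Int_Diff_Un)
  moreover have "card (?S - ?T) \<le> card L" by (rule card_mono[OF assms(3) assms(1)])
  moreover have "card (?S \<inter> ?T) + card G \<le> card ?T"
  proof -
    have "(?S \<inter> ?T) \<inter> G = {}" using assms(2) by auto
    moreover have "(?S \<inter> ?T) \<union> G \<subseteq> ?T" using assms(2) by auto
    moreover have "finite G" using assms(2) fS finite_subset by blast
    ultimately show ?thesis using fS
      by (metis card_Un_disjoint card_mono finite_Int)
  qed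
  ultimately show ?thesis by linarith
qed

locale GG =
  fixes n :: nat and E :: "(nat \<times> nat) set"
  assumes n4: "4 \<le> n" and adm: "admissible n E"
begin

lemma Esub: "(x, y) \<in> E \<Longrightarrow> x < n \<and> y < n \<and> x \<noteq> y"
  using adm unfolding admissible_def circ_interval_def is_digraph_def by blast

lemma ci: "(u, w) \<in> E \<Longrightarrow> clockwise n u v w \<Longrightarrow> v < n \<Longrightarrow> (u, v) \<in> E \<and> (v, w) \<in> E"
  using adm Esub unfolding admissible_def circ_interval_def by blast

lemma tf: "(u, v) \<in> E \<Longrightarrow> (v, u) \<notin> E"
  using adm Esub unfolding admissible_def two_free_def by blast

lemma finE: "finite E"
proof -
  have "E \<subseteq> {..<n} \<times> {..<n}" using Esub by auto
  then show ?thesis by (rule finite_subset) auto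
qed

lemma finN: "finite (nonedges n E)"
proof -
  have "nonedges n E \<subseteq> {..<n} \<times> {..<n}" unfolding nonedges_def by auto
  then show ?thesis by (rule finite_subset) auto
qed

lemma edge_len: "(x, y) \<in> E \<Longrightarrow> cdist n x y \<le> betaG n E"
proof -
  assume h: "(x, y) \<in> E"
  then have "cdist n x y \<in> plen n ` E" unfolding plen_def by force
  then show ?thesis unfolding betaG_def using finE h by (auto intro!: Max_ge)
qed

lemma nonedge_len: "(x, y) \<in> nonedges n E \<Longrightarrow> the_enat (alphaG n E) \<le> cdist n x y"
proof -
  assume h: "(x, y) \<in> nonedges n E"
  then have "cdist n x y \<in> plen n ` nonedges n E" unfolding plen_def by force
  then show ?thesis unfolding alphaG_def using finN h by (auto intro!: Min_le)
qed

lemma nonedgeI: "x < n \<Longrightarrow> y < n \<Longrightarrow> x \<noteq> y \<Longrightarrow> (x, y) \<notin> E \<Longrightarrow> (y, x) \<notin> E \<Longrightarrow> (x, y) \<in> nonedges n E"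
  unfolding nonedges_def by auto

lemma nonedgeD: "(x, y) \<in> nonedges n E \<Longrightarrow> x < n \<and> y < n \<and> x \<noteq> y \<and> (x, y) \<notin> E \<and> (y, x) \<notin> E"
  unfolding nonedges_def by auto

end




lemma card_dist2: assumes "x < n"
  shows "card {z. z < n \<and> P (cdist n z x)} = card {k. k < n \<and> P k}"
proof -
  have "bij_betw (\<lambda>z. cdist n z x) {z. z < n \<and> P (cdist n z x)} {k. k < n \<and> P k}"
    unfolding bij_betw_def
  proof
    show "inj_on (\<lambda>z. cdist n z x) {z. z < n \<and> P (cdist n z x)}"
      using assms by (auto intro!: inj_onI simp: cd_expl split: if_splits)
    show "(\<lambda>z. cdist n z x) ` {z. z < n \<and> P (cdist n z x)} = {k. k < n \<and> P k}"
    proof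
      show "(\<lambda>z. cdist n z x) ` {z. z < n \<and> P (cdist n z x)} \<subseteq> {k. k < n \<and> P k}"
        using assms cd_lt by auto
      show "{k. k < n \<and> P k} \<subseteq> (\<lambda>z. cdist n z x) ` {z. z < n \<and> P (cdist n z x)}"
      proof
        fix k assume "k \<in> {k. k < n \<and> P k}"
        then have k: "k<n" "P k" by auto
        define z where "z = (if k \<le> x then x - k else x + n - k)"
        have "z < n" "cdist n z x = k" using assms k(1) unfolding z_def by (auto simp: cd_expl)
        then show "k \<in> (\<lambda>z. cdist n z x) ` {z. z < n \<and> P (cdist n z x)}"
          using k by (metis (mono_tags, lifting) image_eqI mem_Collect_eq)
      qed
    qed
  qed
  then show ?thesis by (rule bij_betw_same_card)
qed

context GG
begin

abbreviation bb where "bb \<equiv> betaG n E"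
abbreviation aa where "aa \<equiv> the_enat (alphaG n E)"

lemma npos: "0 < n" using n4 by simp

lemma del_adm:
  assumes e: "(u, v) \<in> E" "cdist n u v = bb"
  shows "admissible n (E - {(u, v)})"
proof -
  have dg: "is_digraph n (E - {(u, v)})" using Esub unfolding is_digraph_def by auto
  have "\<forall>p<n. \<forall>q<n. \<forall>r<n. clockwise n p q r \<and> (p, r) \<in> E - {(u, v)} \<longrightarrow>
      (p, q) \<in> E - {(u, v)} \<and> (q, r) \<in> E - {(u, v)}"
  proof (intro allI impI)
    fix p q r assume h: "p < n" "q < n" "r < n" "clockwise n p q r \<and> (p, r) \<in> E - {(u, v)}"
    then have "(p, r) \<in> E" "clockwise n p q r" by auto
    then have pq: "(p, q) \<in> E" and qr: "(q, r) \<in> E" using ci[of p r q] h(2) by auto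
    have add: "cdist n p q + cdist n q r = cdist n p r" using cw_add h by auto
    have pos: "0 < cdist n p q" "0 < cdist n q r"
      using h cd_pos unfolding clockwise_def by auto
    have le: "cdist n p r \<le> bb" using edge_len h by auto
    have "(p, q) \<noteq> (u, v)" using add pos le e(2) by auto
    moreover have "(q, r) \<noteq> (u, v)" using add pos le e(2) by auto
    ultimately show "(p, q) \<in> E - {(u, v)} \<and> (q, r) \<in> E - {(u, v)}" using pq qr by auto
  qed
  then have "circ_interval n (E - {(u, v)})" using dg unfolding circ_interval_def by blast
  moreover have "two_free (E - {(u, v)})" using tf unfolding two_free_def by blast
  ultimately show ?thesis unfolding admissible_def by blast
qed

definition arcset :: "nat \<Rightarrow> nat \<Rightarrow> nat set" where
  "arcset x y = {z. z < n \<and> 0 < cdist n x z \<and> cdist n x z < cdist n x y}"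

lemma card_arcset: "x < n \<Longrightarrow> y < n \<Longrightarrow> card (arcset x y) = cdist n x y - 1"
  unfolding arcset_def
  using card_dist[of x n "\<lambda>k. 0 < k \<and> k < cdist n x y"] card_range1[of "cdist n x y" n] cd_lt[of x n y]
  by simp

lemma arcset_cw: "x < n \<Longrightarrow> y < n \<Longrightarrow> z \<in> arcset x y \<Longrightarrow> clockwise n x z y"
  unfolding arcset_def clockwise_def by (auto dest: cd_inj simp: cd_self)

lemma fin_arc: "finite (arcset x y)" unfolding arcset_def by auto

lemma del_O_sub:
  assumes e: "(u, v) \<in> E"
  shows "{z. (v, z) \<in> E} \<subseteq> arcset v u"
proof
  fix z assume "z \<in> {z. (v, z) \<in> E}"
  then have vz: "(v, z) \<in> E" by simp
  have uv: "u < n" "v < n" "u \<noteq> v" using Esub e by auto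
  have z: "z < n" "z \<noteq> v" using Esub vz by auto
  have "z \<noteq> u" using tf e vz by auto
  have "cdist n v z \<noteq> cdist n v u" using cd_inj \<open>z \<noteq> u\<close> z uv by metis
  moreover have "\<not> cdist n v u < cdist n v z"
  proof
    assume "cdist n v u < cdist n v z"
    then have "clockwise n v u z" unfolding clockwise_def using \<open>z \<noteq> u\<close> z uv by auto
    then have "(v, u) \<in> E" using ci vz uv by blast
    then show False using tf e by blast
  qed
  ultimately show "z \<in> arcset v u" unfolding arcset_def using z uv cd_pos by auto
qed

lemma del_I_sub:
  assumes e: "(u, v) \<in> E"
  shows "{z. (z, u) \<in> E} \<subseteq> arcset v u"
proof
  fix z assume "z \<in> {z. (z, u) \<in> E}"
  then have zu: "(z, u) \<in> E" by simp
  have uv: "u < n" "v < n" "u \<noteq> v" using Esub e by auto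
  have z: "z < n" "z \<noteq> u" using Esub zu by auto
  have "z \<noteq> v" using tf e zu by auto
  have "cdist n v z \<noteq> cdist n v u" using cd_inj z uv by metis
  moreover have "\<not> cdist n v u < cdist n v z"
  proof
    assume "cdist n v u < cdist n v z"
    then have "clockwise n v u z" unfolding clockwise_def using \<open>z \<noteq> v\<close> z uv by auto
    then have "clockwise n z v u" using cw_rot z uv by blast
    then have "(v, u) \<in> E" using ci zu uv by blast
    then show False using tf e by blast
  qed
  ultimately show "z \<in> arcset v u" unfolding arcset_def using z uv \<open>z \<noteq> v\<close> cd_pos by auto
qed

end


context GG begin

lemma del_count:
  assumes e: "(u, v) \<in> E" "cdist n u v = bb"
  defines "Ov \<equiv> {z. (v, z) \<in> E}" and "Iu \<equiv> {z. (z, u) \<in> E}"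
  shows "int (P3t n (E - {(u, v)})) \<ge> int (P3t n E) - (int (card Ov) + int (card Iu) - 2 * int (card (Ov \<inter> Iu)))
           + (int bb - 1) + int (card (Ov \<inter> Iu))"
proof -
  define C where "C = Ov \<inter> Iu"
  define E' where "E' = E - {(u, v)}"
  have uv: "u < n" "v < n" "u \<noteq> v" using Esub e by auto
  have fO: "finite Ov" using del_O_sub[OF e(1)] fin_arc finite_subset unfolding Ov_def by blast
  have fI: "finite Iu" using del_I_sub[OF e(1)] fin_arc finite_subset unfolding Iu_def by blast
  define L where "L = (\<lambda>z. (u, v, z)) ` (Ov - C) \<union> (\<lambda>z. (z, u, v)) ` (Iu - C)"
  define G where "G = (\<lambda>z. (u, z, v)) ` arcset u v \<union> (\<lambda>z. (v, z, u)) ` C"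
  have L1: "P3S n E - P3S n E' \<subseteq> L"
  proof
    fix t assume t: "t \<in> P3S n E - P3S n E'"
    obtain x y z where xyz: "t = (x, y, z)" by (cases t) auto
    have in1: "x < n" "y < n" "z < n" "x \<noteq> y" "y \<noteq> z" "x \<noteq> z" "(x, y) \<in> E" "(y, z) \<in> E"
        "(x, z) \<notin> E" "(z, x) \<notin> E" using t xyz unfolding P3S_def by auto
    have "(x, y) = (u, v) \<or> (y, z) = (u, v)"
      using t xyz in1 unfolding P3S_def E'_def by auto
    then show "t \<in> L"
    proof
      assume "(x, y) = (u, v)"
      then have "z \<in> Ov - C" using in1 unfolding Ov_def C_def Iu_def by auto
      then show ?thesis unfolding L_def using xyz \<open>(x, y) = (u, v)\<close> by auto
    next
      assume "(y, z) = (u, v)"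
      then have "x \<in> Iu - C" using in1 unfolding Ov_def C_def Iu_def by auto
      then show ?thesis unfolding L_def using xyz \<open>(y, z) = (u, v)\<close> by auto
    qed
  qed
  have G1: "G \<subseteq> P3S n E' - P3S n E"
  proof
    fix t assume "t \<in> G"
    then consider (a) z where "z \<in> arcset u v" "t = (u, z, v)" | (b) z where "z \<in> C" "t = (v, z, u)"
      unfolding G_def by auto
    then show "t \<in> P3S n E' - P3S n E"
    proof cases
      case a
      then have cw: "clockwise n u z v" using arcset_cw uv by auto
      then have "z < n" using a(1) unfolding arcset_def by auto
      then have "(u, z) \<in> E" "(z, v) \<in> E" using ci[OF e(1) cw] by auto
      moreover have "z \<noteq> u" "z \<noteq> v" using cw unfolding clockwise_def by auto
      moreover have "(v, u) \<notin> E" using tf[OF e(1)] .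
      ultimately have "(u, z, v) \<in> P3S n E'" "(u, z, v) \<notin> P3S n E"
        using \<open>z < n\<close> uv e(1) unfolding P3S_def E'_def by simp_all
      then show ?thesis using a(2) by simp
    next
      case b
      then have "(v, z) \<in> E" "(z, u) \<in> E" unfolding C_def Ov_def Iu_def by auto
      moreover have "z \<noteq> u" using \<open>(v, z) \<in> E\<close> tf[OF e(1)] by auto
      moreover have "z \<noteq> v" "z < n" using \<open>(v, z) \<in> E\<close> Esub by auto
      moreover have "(v, u) \<notin> E" using tf[OF e(1)] .
      ultimately have "(v, z, u) \<in> P3S n E'" "(v, z, u) \<notin> P3S n E"
        using uv e(1) unfolding P3S_def E'_def by simp_all
      then show ?thesis using b(2) by simp
    qed
  qed
  have fL: "finite L" unfolding L_def using fO fI by auto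
  have main: "int (card (P3S n E')) \<ge> int (card (P3S n E)) - int (card L) + int (card G)"
    by (rule card_change[OF L1 G1 fL])
  have cL: "card L \<le> card (Ov - C) + card (Iu - C)"
  proof -
    have "card L \<le> card ((\<lambda>z. (u, v, z)) ` (Ov - C)) + card ((\<lambda>z. (z, u, v)) ` (Iu - C))"
      unfolding L_def by (rule card_Un_le)
    moreover have "card ((\<lambda>z. (u, v, z)) ` (Ov - C)) \<le> card (Ov - C)" by (rule card_image_le) (use fO in simp)
    moreover have "card ((\<lambda>z. (z, u, v)) ` (Iu - C)) \<le> card (Iu - C)" by (rule card_image_le) (use fI in simp)
    ultimately show ?thesis by linarith
  qed
  have cO: "card (Ov - C) = card Ov - card C" "card C \<le> card Ov" using fO unfolding C_def
    by (auto intro: card_mono simp: card_Diff_subset)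
  have cI: "card (Iu - C) = card Iu - card C" "card C \<le> card Iu" using fI unfolding C_def
    by (auto intro: card_mono simp: card_Diff_subset)
  have cG: "card G = (bb - 1) + card C"
  proof -
    have "card ((\<lambda>z. (u, z, v)) ` arcset u v) = card (arcset u v)"
      by (rule card_image) (auto intro: inj_onI)
    moreover have "card ((\<lambda>z. (v, z, u)) ` C) = card C"
      by (rule card_image) (auto intro: inj_onI)
    moreover have "(\<lambda>z. (u, z, v)) ` arcset u v \<inter> (\<lambda>z. (v, z, u)) ` C = {}" using uv by auto
    moreover have "finite C" using fO unfolding C_def by auto
    ultimately have "card G = card (arcset u v) + card C" unfolding G_def
      using fin_arc by (simp add: card_Un_disjoint)
    then show ?thesis using card_arcset uv e(2) by simp
  qed
  have bpos: "1 \<le> bb" using e(2) cd_pos uv by fastforce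
  show ?thesis using main cL cO cI cG bpos unfolding P3t_card E'_def[symmetric] C_def[symmetric] by linarith
qed

end


context GG begin

lemma rot2: "u < n \<Longrightarrow> v < n \<Longrightarrow> w < n \<Longrightarrow> clockwise n u v w \<Longrightarrow> clockwise n w u v"
  using cw_rot by blast

lemma cw_pos: "u < n \<Longrightarrow> v < n \<Longrightarrow> w < n \<Longrightarrow> clockwise n u v w \<Longrightarrow> 0 < cdist n u v \<and> 0 < cdist n v w"
  unfolding clockwise_def using cd_pos by auto

lemma nonedge_sym: "(x, y) \<in> nonedges n E \<Longrightarrow> (y, x) \<in> nonedges n E"
  unfolding nonedges_def by auto

context
  fixes w x
  assumes q: "(w, x) \<in> nonedges n E" and ql: "cdist n w x = aa"
begin

lemma wx: "w < n" "x < n" "w \<noteq> x" "(w, x) \<notin> E" "(x, w) \<notin> E" using nonedgeD[OF q] by auto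

lemma xw_len: "cdist n x w = n - aa"
  using cd_sym[of w n x] wx ql by auto

lemma aa_half: "aa \<le> n - aa"
  using nonedge_len[OF nonedge_sym[OF q]] xw_len by simp

lemma add_between:
  assumes z: "z \<in> arcset w x"
  shows "(w, z) \<in> E \<and> (z, x) \<in> E"
proof -
  have cw: "clockwise n w z x" using arcset_cw[OF wx(1,2) z] .
  have zn: "z < n" using z unfolding arcset_def by auto
  have sum: "cdist n w z + cdist n z x = aa" using cw_add[OF wx(1) zn wx(2) cw] ql by simp
  have pos: "0 < cdist n w z" "0 < cdist n z x" using cw_pos[OF wx(1) zn wx(2) cw] by auto
  have d: "w \<noteq> z" "z \<noteq> x" using cw unfolding clockwise_def by auto
  have "(w, z) \<in> E \<or> (z, w) \<in> E"
  proof (rule ccontr)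
    assume "\<not> ?thesis"
    then have "(w, z) \<in> nonedges n E" using nonedgeI wx zn d by blast
    then show False using nonedge_len sum pos by fastforce
  qed
  moreover have "(z, w) \<notin> E"
  proof
    assume "(z, w) \<in> E"
    moreover have "clockwise n z x w" using cw_rot[OF wx(1) zn wx(2) cw] .
    ultimately show False using ci wx by blast
  qed
  moreover have "(z, x) \<in> E \<or> (x, z) \<in> E"
  proof (rule ccontr)
    assume "\<not> ?thesis"
    then have "(z, x) \<in> nonedges n E" using nonedgeI wx zn d by blast
    then show False using nonedge_len sum pos by fastforce
  qed
  moreover have "(x, z) \<notin> E"
  proof
    assume "(x, z) \<in> E"
    moreover have "clockwise n x w z" using rot2[OF wx(1) zn wx(2) cw] .
    ultimately show False using ci wx by blast
  qed
  ultimately show ?thesis by blast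
qed

lemma add_adm: "admissible n (insert (w, x) E)"
proof -
  have dg: "is_digraph n (insert (w, x) E)" using Esub wx unfolding is_digraph_def by auto
  have "\<forall>p<n. \<forall>r<n. \<forall>s<n. clockwise n p r s \<and> (p, s) \<in> insert (w, x) E \<longrightarrow>
      (p, r) \<in> insert (w, x) E \<and> (r, s) \<in> insert (w, x) E"
  proof (intro allI impI)
    fix p r s assume h: "p < n" "r < n" "s < n" "clockwise n p r s \<and> (p, s) \<in> insert (w, x) E"
    show "(p, r) \<in> insert (w, x) E \<and> (r, s) \<in> insert (w, x) E"
    proof (cases "(p, s) = (w, x)")
      case True
      then have "r \<in> arcset w x" using h cd_pos[of w n r] unfolding arcset_def clockwise_def by auto
      then show ?thesis using add_between True by auto
    next
      case False
      then have "(p, s) \<in> E" "clockwise n p r s" using h by auto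
      then show ?thesis using ci h(2) by blast
    qed
  qed
  then have "circ_interval n (insert (w, x) E)" using dg unfolding circ_interval_def by blast
  moreover have "two_free (insert (w, x) E)" using tf wx unfolding two_free_def by blast
  ultimately show ?thesis unfolding admissible_def by blast
qed

lemma add_O_sub: "{z. (x, z) \<in> E} \<subseteq> arcset x w"
proof
  fix z assume "z \<in> {z. (x, z) \<in> E}"
  then have xz: "(x, z) \<in> E" by simp
  have z: "z < n" "z \<noteq> x" using Esub xz by auto
  have "z \<noteq> w" using wx xz by auto
  have "cdist n x z \<noteq> cdist n x w" using cd_inj \<open>z \<noteq> w\<close> z wx by metis
  moreover have "\<not> cdist n x w < cdist n x z"
  proof
    assume "cdist n x w < cdist n x z"
    then have "clockwise n x w z" unfolding clockwise_def using \<open>z \<noteq> w\<close> z wx by auto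
    then have "(x, w) \<in> E" using ci xz wx by blast
    then show False using wx by blast
  qed
  ultimately show "z \<in> arcset x w" unfolding arcset_def using z wx cd_pos by auto
qed

lemma add_I_sub: "{z. (z, w) \<in> E} \<subseteq> arcset x w"
proof
  fix z assume "z \<in> {z. (z, w) \<in> E}"
  then have zw: "(z, w) \<in> E" by simp
  have z: "z < n" "z \<noteq> w" using Esub zw by auto
  have "z \<noteq> x" using wx zw by auto
  have "cdist n x z \<noteq> cdist n x w" using cd_inj z wx by metis
  moreover have "\<not> cdist n x w < cdist n x z"
  proof
    assume "cdist n x w < cdist n x z"
    then have "clockwise n x w z" unfolding clockwise_def using \<open>z \<noteq> x\<close> z wx by auto
    then have "clockwise n z x w" using rot2 z wx by blast
    then have "(x, w) \<in> E" using ci zw wx by blast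
    then show False using wx by blast
  qed
  ultimately show "z \<in> arcset x w" unfolding arcset_def using z wx \<open>z \<noteq> x\<close> cd_pos by auto
qed

lemma add_O_lower: "{z. z < n \<and> 0 < cdist n x z \<and> cdist n x z < aa} \<subseteq> {z. (x, z) \<in> E}"
proof
  fix z assume "z \<in> {z. z < n \<and> 0 < cdist n x z \<and> cdist n x z < aa}"
  then have z: "z < n" "0 < cdist n x z" "cdist n x z < aa" by auto
  have d: "z \<noteq> x" using z(2) cd_self by (metis less_irrefl)
  have "(x, z) \<in> E \<or> (z, x) \<in> E"
  proof (rule ccontr)
    assume "\<not> ?thesis"
    then have "(x, z) \<in> nonedges n E" using nonedgeI wx z d by blast
    then show False using nonedge_len z(3) by fastforce
  qed
  moreover have "(z, x) \<notin> E"
  proof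
    assume zx: "(z, x) \<in> E"
    have "cdist n x z < cdist n x w" using z(3) aa_half xw_len by simp
    moreover have "z \<noteq> w" using zx wx by auto
    ultimately have "clockwise n x z w" using d wx unfolding clockwise_def by auto
    then have "clockwise n z w x" using cw_rot z wx by blast
    then have "(w, x) \<in> E" using ci zx wx by blast
    then show False using wx by blast
  qed
  ultimately show "z \<in> {z. (x, z) \<in> E}" by blast
qed

lemma add_C_exact:
  assumes "{z. (x, z) \<in> E} \<inter> {z. (z, w) \<in> E} \<noteq> {}"
  shows "{z. (x, z) \<in> E} \<union> {z. (z, w) \<in> E} = arcset x w"
proof
  show "{z. (x, z) \<in> E} \<union> {z. (z, w) \<in> E} \<subseteq> arcset x w" using add_O_sub add_I_sub by blast
  obtain b where b: "(x, b) \<in> E" "(b, w) \<in> E" using assms by blast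
  have bn: "b < n" "b \<noteq> x" "b \<noteq> w" using b Esub by auto
  have bx: "cdist n x b < cdist n x w" using add_O_sub b(1) unfolding arcset_def by auto
  show "arcset x w \<subseteq> {z. (x, z) \<in> E} \<union> {z. (z, w) \<in> E}"
  proof
    fix z assume z: "z \<in> arcset x w"
    then have zn: "z < n" "0 < cdist n x z" "cdist n x z < cdist n x w" unfolding arcset_def by auto
    have zx: "z \<noteq> x" using zn(2) cd_self by (metis less_irrefl)
    have zw: "z \<noteq> w" using zn(3) by auto
    consider "cdist n x z < cdist n x b" | "z = b" | "cdist n x b < cdist n x z"
      using cd_inj[OF wx(2) zn(1) bn(1)] by (metis linorder_neqE_nat)
    then show "z \<in> {z. (x, z) \<in> E} \<union> {z. (z, w) \<in> E}"
    proof cases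
      case 1
      then have "clockwise n x z b" using zx bn unfolding clockwise_def by auto
      then show ?thesis using ci b(1) zn(1) by blast
    next
      case 2 then show ?thesis using b by auto
    next
      case 3
      have c1: "clockwise n x b z" using 3 zx bn unfolding clockwise_def by auto
      have c2: "clockwise n x b w" using bx bn wx unfolding clockwise_def by auto
      have "cdist n x b + cdist n b z = cdist n x z" using cw_add[OF wx(2) bn(1) zn(1) c1] .
      moreover have "cdist n x b + cdist n b w = cdist n x w" using cw_add[OF wx(2) bn(1) wx(1) c2] .
      ultimately have "cdist n b z < cdist n b w" using zn(3) by linarith
      then have "clockwise n b z w" using bn zw 3 unfolding clockwise_def by auto
      then show ?thesis using ci b(2) zn(1) by blast
    qed
  qed
qed

end
end


context GG begin

lemma add_count:
  assumes q: "(w, x) \<in> nonedges n E" and ql: "cdist n w x = aa"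
  defines "Ox \<equiv> {z. (x, z) \<in> E}" and "Iw \<equiv> {z. (z, w) \<in> E}"
  shows "int (P3t n (insert (w, x) E)) \<ge> int (P3t n E) - (int aa - 1 + int (card (Ox \<inter> Iw)))
           + (int (card Ox) + int (card Iw) - 2 * int (card (Ox \<inter> Iw)))"
proof -
  define C where "C = Ox \<inter> Iw"
  define E' where "E' = insert (w, x) E"
  note wx = wx[OF q ql]
  have fO: "finite Ox" using add_O_sub[OF q ql] fin_arc finite_subset unfolding Ox_def by blast
  have fI: "finite Iw" using add_I_sub[OF q ql] fin_arc finite_subset unfolding Iw_def by blast
  define L where "L = (\<lambda>z. (w, z, x)) ` arcset w x \<union> (\<lambda>z. (x, z, w)) ` C"
  define G where "G = (\<lambda>z. (w, x, z)) ` (Ox - C) \<union> (\<lambda>z. (z, w, x)) ` (Iw - C)"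
  have L1: "P3S n E - P3S n E' \<subseteq> L"
  proof
    fix t assume t: "t \<in> P3S n E - P3S n E'"
    obtain p r s where prs: "t = (p, r, s)" by (cases t) auto
    have in1: "p < n" "r < n" "s < n" "p \<noteq> r" "r \<noteq> s" "p \<noteq> s" "(p, r) \<in> E" "(r, s) \<in> E"
        "(p, s) \<notin> E" "(s, p) \<notin> E" using t prs unfolding P3S_def by auto
    have "(p, s) = (w, x) \<or> (s, p) = (w, x)"
      using t prs in1 unfolding P3S_def E'_def by auto
    then show "t \<in> L"
    proof
      assume ps: "(p, s) = (w, x)"
      have "r \<in> arcset w x"
      proof -
        have "r \<noteq> x" using in1 ps by auto
        then have "cdist n w r \<noteq> cdist n w x" using cd_inj[of w n r x] wx in1 by blast
        moreover have "\<not> cdist n w x < cdist n w r"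
        proof
          assume "cdist n w x < cdist n w r"
          then have "clockwise n w x r" using ps in1 unfolding clockwise_def by auto
          then show False using ci in1 ps wx by blast
        qed
        ultimately show ?thesis unfolding arcset_def using in1 ps cd_pos by auto
      qed
      then show ?thesis unfolding L_def using prs ps by auto
    next
      assume "(s, p) = (w, x)"
      then have "r \<in> C" using in1 unfolding Ox_def C_def Iw_def by auto
      then show ?thesis unfolding L_def using prs \<open>(s, p) = (w, x)\<close> by auto
    qed
  qed
  have G1: "G \<subseteq> P3S n E' - P3S n E"
  proof
    fix t assume "t \<in> G"
    then consider (a) z where "z \<in> Ox - C" "t = (w, x, z)" | (b) z where "z \<in> Iw - C" "t = (z, w, x)"
      unfolding G_def by auto
    then show "t \<in> P3S n E' - P3S n E"
    proof cases
      case a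
      then have xz: "(x, z) \<in> E" and nzw: "(z, w) \<notin> E" unfolding Ox_def C_def Iw_def by auto
      have za: "z \<in> arcset x w" using add_O_sub[OF q ql] xz by auto
      have zn: "z < n" "z \<noteq> x" using Esub xz by auto
      have zw: "z \<noteq> w" using za unfolding arcset_def by auto
      have cw: "clockwise n x z w" using arcset_cw[OF wx(2,1) za] .
      have "clockwise n w x z" using rot2[OF wx(2) zn(1) wx(1) cw] .
      then have "(w, z) \<notin> E" using ci wx zn by blast
      then have "(w, x, z) \<in> P3S n E'" "(w, x, z) \<notin> P3S n E"
        using wx zn zw xz nzw unfolding P3S_def E'_def by auto
      then show ?thesis using a(2) by simp
    next
      case b
      then have zw: "(z, w) \<in> E" and nxz: "(x, z) \<notin> E" unfolding Ox_def C_def Iw_def by auto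
      have za: "z \<in> arcset x w" using add_I_sub[OF q ql] zw by auto
      have zn: "z < n" "z \<noteq> w" using Esub zw by auto
      have "0 < cdist n x z" using za unfolding arcset_def by simp
      then have zx: "z \<noteq> x" by (auto simp: cd_self)
      have cw: "clockwise n x z w" using arcset_cw[OF wx(2,1) za] .
      have "clockwise n z w x" using cw_rot[OF wx(2) zn(1) wx(1) cw] .
      then have "(z, x) \<notin> E" using ci wx zn by blast
      then have "(z, w, x) \<in> P3S n E'" "(z, w, x) \<notin> P3S n E"
        using wx zn zx zw nxz unfolding P3S_def E'_def by auto
      then show ?thesis using b(2) by simp
    qed
  qed
  have fL: "finite L" unfolding L_def C_def using fO fin_arc by auto
  have main: "int (card (P3S n E')) \<ge> int (card (P3S n E)) - int (card L) + int (card G)"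
    by (rule card_change[OF L1 G1 fL])
  have cL: "card L \<le> card (arcset w x) + card C"
  proof -
    have "card L \<le> card ((\<lambda>z. (w, z, x)) ` arcset w x) + card ((\<lambda>z. (x, z, w)) ` C)"
      unfolding L_def by (rule card_Un_le)
    moreover have "card ((\<lambda>z. (w, z, x)) ` arcset w x) \<le> card (arcset w x)" by (rule card_image_le) (rule fin_arc)
    moreover have "card ((\<lambda>z. (x, z, w)) ` C) \<le> card C" by (rule card_image_le) (use fO in \<open>simp add: C_def\<close>)
    ultimately show ?thesis by linarith
  qed
  have cO: "card (Ox - C) = card Ox - card C" "card C \<le> card Ox" using fO unfolding C_def
    by (auto intro: card_mono simp: card_Diff_subset)
  have cI: "card (Iw - C) = card Iw - card C" "card C \<le> card Iw" using fI unfolding C_def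
    by (auto intro: card_mono simp: card_Diff_subset)
  have cG: "card G = card (Ox - C) + card (Iw - C)"
  proof -
    have "card ((\<lambda>z. (w, x, z)) ` (Ox - C)) = card (Ox - C)"
      by (rule card_image) (auto intro: inj_onI)
    moreover have "card ((\<lambda>z. (z, w, x)) ` (Iw - C)) = card (Iw - C)"
      by (rule card_image) (auto intro: inj_onI)
    moreover have "(\<lambda>z. (w, x, z)) ` (Ox - C) \<inter> (\<lambda>z. (z, w, x)) ` (Iw - C) = {}" using wx by auto
    ultimately show ?thesis unfolding G_def using fO fI by (simp add: card_Un_disjoint)
  qed
  have ca: "card (arcset w x) = aa - 1" using card_arcset wx ql by simp
  have apos: "1 \<le> aa" using ql cd_pos wx by fastforce
  show ?thesis using main cL cO cI cG ca apos unfolding P3t_card E'_def[symmetric] C_def[symmetric] by linarith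
qed

end



definition XS :: "nat \<Rightarrow> (nat \<times> nat) set \<Rightarrow> ((nat \<times> nat) \<times> (nat \<times> nat)) set" where
  "XS n E = {(e, f). e \<in> E \<and> f \<in> nonedges n E \<and> plen n e > plen n f}"

lemma xi_card: "xi n E = card (XS n E)" unfolding xi_def XS_def by simp

context GG begin

lemma finXS: "finite (XS n E)"
proof -
  have "XS n E \<subseteq> E \<times> nonedges n E" unfolding XS_def by auto
  then show ?thesis using finE finN finite_subset by blast
qed

lemma xi_add:
  assumes q: "(w, x) \<in> nonedges n E" and ql: "cdist n w x = aa"
    and e: "(u, v) \<in> E" "aa < cdist n u v"
  shows "xi n (insert (w, x) E) < xi n E"
proof -
  have sub: "XS n (insert (w, x) E) \<subseteq> XS n E - {((u, v), (w, x))}"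
  proof
    fix t assume t: "t \<in> XS n (insert (w, x) E)"
    obtain e f where ef: "t = (e, f)" by (cases t) auto
    have f: "f \<in> nonedges n E" "f \<noteq> (w, x)" using t ef unfolding XS_def nonedges_def by auto
    have "e \<noteq> (w, x)"
    proof
      assume "e = (w, x)"
      then have "plen n f < aa" using t ef ql unfolding XS_def plen_def by auto
      moreover obtain f1 f2 where "f = (f1, f2)" by (cases f) auto
      ultimately show False using nonedge_len f(1) unfolding plen_def by fastforce
    qed
    then show "t \<in> XS n E - {((u, v), (w, x))}" using t ef f unfolding XS_def by auto
  qed
  have "((u, v), (w, x)) \<in> XS n E" using e q ql unfolding XS_def plen_def by auto
  then have "card (XS n E - {((u, v), (w, x))}) < card (XS n E)"
    using finXS by (meson card_Diff1_less)
  moreover have "card (XS n (insert (w, x) E)) \<le> card (XS n E - {((u, v), (w, x))})"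
    using sub finXS by (meson card_mono finite_Diff)
  ultimately show ?thesis unfolding xi_card by linarith
qed

lemma xi_del:
  assumes e: "(u, v) \<in> E" "cdist n u v = bb" and half: "2 * bb \<le> n"
    and q: "(w, x) \<in> nonedges n E" and ql: "cdist n w x < bb"
  shows "xi n (E - {(u, v)}) < xi n E"
proof -
  have uv: "u < n" "v < n" "u \<noteq> v" using Esub e by auto
  have vu: "cdist n v u = n - bb" using cd_sym[OF uv] e(2) by simp
  have sub: "XS n (E - {(u, v)}) \<subseteq> XS n E - {((u, v), (w, x))}"
  proof
    fix t assume t: "t \<in> XS n (E - {(u, v)})"
    obtain e f where ef: "t = (e, f)" by (cases t) auto
    obtain e1 e2 where e12: "e = (e1, e2)" by (cases e) auto
    have eE: "e \<in> E" "e \<noteq> (u, v)" using t ef unfolding XS_def by auto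
    have le: "plen n e \<le> bb" using edge_len eE e12 unfolding plen_def by auto
    have f: "f \<in> nonedges n (E - {(u, v)})" using t ef unfolding XS_def by auto
    have "f \<in> nonedges n E"
    proof (rule ccontr)
      assume "f \<notin> nonedges n E"
      then have "f = (u, v) \<or> f = (v, u)" using f unfolding nonedges_def by auto
      then have "plen n f \<ge> bb" using e(2) vu half unfolding plen_def by auto
      then show False using le t ef unfolding XS_def by auto
    qed
    then show "t \<in> XS n E - {((u, v), (w, x))}" using t ef eE unfolding XS_def by auto
  qed
  have "((u, v), (w, x)) \<in> XS n E" using e q ql unfolding XS_def plen_def by auto
  then have "card (XS n E - {((u, v), (w, x))}) < card (XS n E)"
    using finXS by (meson card_Diff1_less)
  moreover have "card (XS n (E - {(u, v)})) \<le> card (XS n E - {((u, v), (w, x))})"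
    using sub finXS by (meson card_mono finite_Diff)
  ultimately show ?thesis unfolding xi_card by linarith
qed

end



lemma cnt1: "x < n \<Longrightarrow> m \<le> n \<Longrightarrow> card {z. z < n \<and> 0 < cdist n x z \<and> cdist n x z < m} = m - 1"
  using card_dist[of x n "\<lambda>k. 0 < k \<and> k < m"] card_range1[of m n] by simp
lemma cnt2: "x < n \<Longrightarrow> m < n \<Longrightarrow> card {z. z < n \<and> 0 < cdist n x z \<and> cdist n x z \<le> m} = m"
  using card_dist[of x n "\<lambda>k. 0 < k \<and> k \<le> m"] card_range2[of m n] by simp
lemma cnt1': "x < n \<Longrightarrow> m \<le> n \<Longrightarrow> card {z. z < n \<and> 0 < cdist n z x \<and> cdist n z x < m} = m - 1"
  using card_dist2[of x n "\<lambda>k. 0 < k \<and> k < m"] card_range1[of m n] by simp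
lemma cnt2': "x < n \<Longrightarrow> m < n \<Longrightarrow> card {z. z < n \<and> 0 < cdist n z x \<and> cdist n z x \<le> m} = m"
  using card_dist2[of x n "\<lambda>k. 0 < k \<and> k \<le> m"] card_range2[of m n] by simp

lemma ar1: "(b::int) + 3 * c \<le> s \<Longrightarrow> U \<le> n - b - 1 \<Longrightarrow> U + c = s \<Longrightarrow> 2 * s \<le> 3 * n - 4 * b - 3"
  by (smt (verit))
lemma ar2: "(o1::int) \<ge> n - b - 1 \<Longrightarrow> i1 \<ge> n - b - 1 \<Longrightarrow> 2 * (o1 + i1) \<le> 3 * n - 4 * b - 3 \<Longrightarrow> 4 \<le> n \<Longrightarrow> False"
  by (smt (verit))
lemma ar3: "(o1::int) \<ge> a - 1 \<Longrightarrow> i1 \<ge> a - 1 \<Longrightarrow> 2 * (o1 + i1) \<le> 3 * n - 4 * b - 3 \<Longrightarrow> 4 * (a + b) \<le> 3 * n + 1"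
  by (smt (verit))
lemma ar4: "(o1::int) + i1 \<ge> 2 * a - 1 \<Longrightarrow> 2 * (o1 + i1) \<le> 3 * n - 4 * b - 3 \<Longrightarrow> 4 * (a + b) \<le> 3 * n - 1"
  by (smt (verit))

locale OPT = GG +
  assumes opt: "optimal n E" and gt: "alphaG n E < enat (betaG n E)"
begin

lemma opt_le: "admissible n E' \<Longrightarrow> P3t n E' \<le> P3t n E"
  using opt unfolding optimal_def by blast

lemma opt_strict: "admissible n E' \<Longrightarrow> xi n E' < xi n E \<Longrightarrow> P3t n E' < P3t n E"
  using opt unfolding optimal_def by (meson le_neq_implies_less not_le)

lemma N_ne: "nonedges n E \<noteq> {}"
  using gt unfolding alphaG_def by auto

lemma alpha_eq: "enat aa = alphaG n E"
  using N_ne unfolding alphaG_def by simp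

lemma ab: "aa < bb" using gt alpha_eq by (metis enat_ord_simps(2))

lemma E_ne: "E \<noteq> {}"
  using ab unfolding betaG_def by auto

lemma ex_short: "\<exists>w x. (w, x) \<in> nonedges n E \<and> cdist n w x = aa"
proof -
  have "Min (plen n ` nonedges n E) \<in> plen n ` nonedges n E"
    using N_ne finN by (intro Min_in) auto
  then obtain p where p: "p \<in> nonedges n E" "plen n p = Min (plen n ` nonedges n E)" by (metis imageE)
  obtain a b where "p = (a, b)" by (cases p) auto
  then show ?thesis using p N_ne unfolding alphaG_def plen_def by auto
qed

lemma ex_long: "\<exists>u v. (u, v) \<in> E \<and> cdist n u v = bb"
proof -
  have "Max (plen n ` E) \<in> plen n ` E"
    using E_ne finE by (intro Max_in) auto
  then obtain p where p: "p \<in> E" "plen n p = Max (plen n ` E)" by (metis imageE)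
  obtain a b where "p = (a, b)" by (cases p) auto
  then show ?thesis using p E_ne unfolding betaG_def plen_def by auto
qed

lemma bb_lt: "bb < n"
proof -
  obtain u v where "(u, v) \<in> E" "cdist n u v = bb" using ex_long by blast
  moreover then have "u < n" "v < n" using Esub by auto
  ultimately show ?thesis using cd_lt[of u n v] by simp
qed

lemma short_not_nonedge: "cdist n a b < aa \<Longrightarrow> (a, b) \<notin> nonedges n E"
  using nonedge_len by fastforce

abbreviation SI where "SI y \<equiv> (\<exists>q. shortest_nonedge n E q \<and> incident y q)"
abbreviation LI where "LI y \<equiv> (\<exists>p. longest_edge n E p \<and> incident y p)"

lemma SI_not_nonedge1: "\<not> SI a \<Longrightarrow> cdist n a b = aa \<Longrightarrow> (a, b) \<notin> nonedges n E"
  unfolding shortest_nonedge_def incident_def plen_def using alpha_eq by (metis fst_conv snd_conv)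
lemma SI_not_nonedge2: "\<not> SI b \<Longrightarrow> cdist n a b = aa \<Longrightarrow> (a, b) \<notin> nonedges n E"
  unfolding shortest_nonedge_def incident_def plen_def using alpha_eq by (metis fst_conv snd_conv)

section \<open>Deletion of a longest edge\<close>

context
  fixes u v
  assumes e: "(u, v) \<in> E" and el: "cdist n u v = bb"
begin

lemma uv: "u < n" "v < n" "u \<noteq> v" using Esub e by auto
lemma vu_len: "cdist n v u = n - bb" using cd_sym[OF uv] el by simp

lemma O_low: "z < n \<Longrightarrow> 0 < cdist n v z \<Longrightarrow> cdist n v z < n - bb \<Longrightarrow> (v, z) \<notin> nonedges n E \<Longrightarrow> (v, z) \<in> E"
proof -
  assume z: "z < n" "0 < cdist n v z" "cdist n v z < n - bb" "(v, z) \<notin> nonedges n E"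
  have zv: "z \<noteq> v" using z(2) cd_self by (metis less_irrefl)
  have "cdist n z v = n - cdist n v z" using cd_sym[of v n z] uv z zv by auto
  then have "(z, v) \<notin> E" using edge_len z(3) by fastforce
  then show ?thesis using z zv uv nonedgeI by blast
qed

lemma I_low: "z < n \<Longrightarrow> 0 < cdist n z u \<Longrightarrow> cdist n z u < n - bb \<Longrightarrow> (z, u) \<notin> nonedges n E \<Longrightarrow> (z, u) \<in> E"
proof -
  assume z: "z < n" "0 < cdist n z u" "cdist n z u < n - bb" "(z, u) \<notin> nonedges n E"
  have zu: "z \<noteq> u" using z(2) cd_self by (metis less_irrefl)
  have "cdist n u z = n - cdist n z u" using cd_sym[of z n u] uv z zu by auto
  then have "(u, z) \<notin> E" using edge_len z(3) by fastforce
  then show ?thesis using z zu uv nonedgeI by blast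
qed

lemma del_bound:
  "2 * bb \<le> n \<and> 2 * (int (card {z. (v, z) \<in> E}) + int (card {z. (z, u) \<in> E})) \<le> 3 * int n - 4 * int bb - 3"
proof -
  define Ov where "Ov = {z. (v, z) \<in> E}"
  define Iu where "Iu = {z. (z, u) \<in> E}"
  have fO: "finite Ov" using del_O_sub[OF e] fin_arc finite_subset unfolding Ov_def by blast
  have fI: "finite Iu" using del_I_sub[OF e] fin_arc finite_subset unfolding Iu_def by blast
  have cnt: "int (P3t n (E - {(u, v)})) \<ge> int (P3t n E) - (int (card Ov) + int (card Iu) - 2 * int (card (Ov \<inter> Iu)))
           + (int bb - 1) + int (card (Ov \<inter> Iu))"
    using del_count[OF e el] unfolding Ov_def Iu_def .
  have un: "card (Ov \<union> Iu) \<le> n - bb - 1"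
  proof -
    have "Ov \<union> Iu \<subseteq> arcset v u" using del_O_sub[OF e] del_I_sub[OF e] unfolding Ov_def Iu_def by blast
    then have "card (Ov \<union> Iu) \<le> card (arcset v u)" using fin_arc by (rule card_mono[rotated])
    then show ?thesis using card_arcset[of v u] uv vu_len by simp
  qed
  have ie: "card (Ov \<union> Iu) + card (Ov \<inter> Iu) = card Ov + card Iu" using card_Un_Int fO fI by metis
  have adm': "admissible n (E - {(u, v)})" using del_adm[OF e el] .
  have le: "P3t n (E - {(u, v)}) \<le> P3t n E" using opt_le[OF adm'] .
  have bn: "bb < n" using bb_lt .
  have half: "2 * bb \<le> n" using cnt le un ie bn by linarith
  obtain w x where q: "(w, x) \<in> nonedges n E" "cdist n w x = aa" using ex_short by blast
  have "xi n (E - {(u, v)}) < xi n E" using xi_del[OF e el half q(1)] q(2) ab by simp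
  then have lt: "P3t n (E - {(u, v)}) < P3t n E" using opt_strict[OF adm'] by blast
  have un': "int (card (Ov \<union> Iu)) \<le> int n - int bb - 1" using un bn by linarith
  have ie': "int (card (Ov \<union> Iu)) + int (card (Ov \<inter> Iu)) = int (card Ov) + int (card Iu)"
    using ie by linarith
  have lt': "int (P3t n (E - {(u, v)})) < int (P3t n E)" using lt by linarith
  have s1: "int bb + 3 * int (card (Ov \<inter> Iu)) \<le> int (card Ov) + int (card Iu)"
    using cnt lt' by linarith
  have "2 * (int (card Ov) + int (card Iu)) \<le> 3 * int n - 4 * int bb - 3"
    using ar1[OF s1 un' ie'] .
  then show ?thesis using half unfolding Ov_def Iu_def by blast
qed

lemma del_final:
  "aa + bb < n \<and> 4 * (int aa + int bb) \<le> 3 * int n + 1 \<and>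
   ((\<not> SI u \<or> \<not> SI v) \<longrightarrow> 4 * (int aa + int bb) \<le> 3 * int n - 1)"
proof -
  define Ov where "Ov = {z. (v, z) \<in> E}"
  define Iu where "Iu = {z. (z, u) \<in> E}"
  have fO: "finite Ov" using del_O_sub[OF e] fin_arc finite_subset unfolding Ov_def by blast
  have fI: "finite Iu" using del_I_sub[OF e] fin_arc finite_subset unfolding Iu_def by blast
  have db: "2 * bb \<le> n" "2 * (int (card Ov) + int (card Iu)) \<le> 3 * int n - 4 * int bb - 3"
    using del_bound unfolding Ov_def Iu_def by auto
  define m where "m = min aa (n - bb)"
  have bn: "bb < n" using bb_lt .
  have mn: "m \<le> n" unfolding m_def by simp
  have lowO: "card Ov \<ge> m - 1"
  proof -
    have "{z. z < n \<and> 0 < cdist n v z \<and> cdist n v z < m} \<subseteq> Ov"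
      unfolding Ov_def m_def using O_low short_not_nonedge by auto
    then have "card {z. z < n \<and> 0 < cdist n v z \<and> cdist n v z < m} \<le> card Ov" using fO by (rule card_mono[rotated])
    then show ?thesis using cnt1[OF uv(2) mn] by simp
  qed
  have lowI: "card Iu \<ge> m - 1"
  proof -
    have "{z. z < n \<and> 0 < cdist n z u \<and> cdist n z u < m} \<subseteq> Iu"
      unfolding Iu_def m_def using I_low short_not_nonedge by auto
    then have "card {z. z < n \<and> 0 < cdist n z u \<and> cdist n z u < m} \<le> card Iu" using fI by (rule card_mono[rotated])
    then show ?thesis using cnt1'[OF uv(1) mn] by simp
  qed
  have a1: "1 \<le> aa"
  proof -
    obtain w x where q: "(w, x) \<in> nonedges n E" "cdist n w x = aa" using ex_short by blast
    then show ?thesis using nonedgeD[OF q(1)] cd_pos by fastforce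
  qed
  have n4': "4 \<le> n" using n4 .
  have anb: "aa + bb < n"
  proof (rule ccontr)
    assume "\<not> aa + bb < n"
    then have "m = n - bb" unfolding m_def by simp
    then have "int (card Ov) \<ge> int n - int bb - 1" "int (card Iu) \<ge> int n - int bb - 1"
      using lowO lowI bn by linarith+
    then show False using ar2 db n4' by fastforce
  qed
  then have mm: "m = aa" unfolding m_def by simp
  have lo: "int (card Ov) \<ge> int aa - 1" "int (card Iu) \<ge> int aa - 1" using lowO lowI mm a1 by linarith+
  have main: "4 * (int aa + int bb) \<le> 3 * int n + 1" using ar3[OF lo db(2)] .
  have extra: "(\<not> SI u \<or> \<not> SI v) \<longrightarrow> 4 * (int aa + int bb) \<le> 3 * int n - 1"
  proof
    assume h: "\<not> SI u \<or> \<not> SI v"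
    have "card Ov \<ge> aa \<or> card Iu \<ge> aa"
    proof (cases "\<not> SI v")
      case True
      have "{z. z < n \<and> 0 < cdist n v z \<and> cdist n v z \<le> aa} \<subseteq> Ov"
      proof
        fix z assume "z \<in> {z. z < n \<and> 0 < cdist n v z \<and> cdist n v z \<le> aa}"
        then have z: "z < n" "0 < cdist n v z" "cdist n v z \<le> aa" by auto
        have "(v, z) \<notin> nonedges n E"
          using short_not_nonedge SI_not_nonedge1[OF True] z(3) by (cases "cdist n v z < aa") auto
        then show "z \<in> Ov" unfolding Ov_def using O_low z anb by auto
      qed
      then have "card {z. z < n \<and> 0 < cdist n v z \<and> cdist n v z \<le> aa} \<le> card Ov" using fO by (rule card_mono[rotated])
      then show ?thesis using cnt2[OF uv(2), of aa] anb by simp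
    next
      case False
      then have h2: "\<not> SI u" using h by blast
      have "{z. z < n \<and> 0 < cdist n z u \<and> cdist n z u \<le> aa} \<subseteq> Iu"
      proof
        fix z assume "z \<in> {z. z < n \<and> 0 < cdist n z u \<and> cdist n z u \<le> aa}"
        then have z: "z < n" "0 < cdist n z u" "cdist n z u \<le> aa" by auto
        have "(z, u) \<notin> nonedges n E"
          using short_not_nonedge SI_not_nonedge2[OF h2] z(3) by (cases "cdist n z u < aa") auto
        then show "z \<in> Iu" unfolding Iu_def using I_low z anb by auto
      qed
      then have "card {z. z < n \<and> 0 < cdist n z u \<and> cdist n z u \<le> aa} \<le> card Iu" using fI by (rule card_mono[rotated])
      then show ?thesis using cnt2'[OF uv(1), of aa] anb by simp
    qed
    then have "int (card Ov) + int (card Iu) \<ge> 2 * int aa - 1" using lo by linarith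
    then show "4 * (int aa + int bb) \<le> 3 * int n - 1" using ar4 db(2) by blast
  qed
  show ?thesis using anb main extra by blast
qed

end

end



lemma ar5: "(t::int) - 3 * c - a + 1 \<le> -1 \<Longrightarrow> t = A + c \<Longrightarrow> A = n - a - 1 \<Longrightarrow> 3 * n - 4 * a - 1 \<le> 2 * t"
  by (smt (verit))
lemma ar6: "(t::int) - a + 1 \<le> -1 \<Longrightarrow> t = o1 + i1 \<Longrightarrow> o1 \<ge> a - 1 \<Longrightarrow> i1 \<ge> 0 \<Longrightarrow> False"
  by (smt (verit))
lemma ar7: "3 * n - 4 * a - 1 \<le> 2 * (t::int) \<Longrightarrow> t \<le> 2 * b \<Longrightarrow> 3 * n - 1 \<le> 4 * (a + b)"
  by (smt (verit))
lemma ar8: "3 * n - 4 * a - 1 \<le> 2 * (t::int) \<Longrightarrow> t \<le> 2 * b - 1 \<Longrightarrow> 3 * n + 1 \<le> 4 * (a + b)"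
  by (smt (verit))

context OPT begin

lemma add_final:
  assumes q: "(w, x) \<in> nonedges n E" and ql: "cdist n w x = aa"
  shows "3 * int n - 1 \<le> 4 * (int aa + int bb) \<and> ((\<not> LI w \<or> \<not> LI x) \<longrightarrow> 3 * int n + 1 \<le> 4 * (int aa + int bb))"
proof -
  define Ox where "Ox = {z. (x, z) \<in> E}"
  define Iw where "Iw = {z. (z, w) \<in> E}"
  note wx = wx[OF q ql]
  have fO: "finite Ox" using add_O_sub[OF q ql] fin_arc finite_subset unfolding Ox_def by blast
  have fI: "finite Iw" using add_I_sub[OF q ql] fin_arc finite_subset unfolding Iw_def by blast
  have cnt: "int (P3t n (insert (w, x) E)) \<ge> int (P3t n E) - (int aa - 1 + int (card (Ox \<inter> Iw)))
           + (int (card Ox) + int (card Iw) - 2 * int (card (Ox \<inter> Iw)))"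
    using add_count[OF q ql] unfolding Ox_def Iw_def .
  obtain u v where e: "(u, v) \<in> E" "cdist n u v = bb" using ex_long by blast
  have "xi n (insert (w, x) E) < xi n E" using xi_add[OF q ql e(1)] e(2) ab by simp
  then have lt: "P3t n (insert (w, x) E) < P3t n E" using opt_strict[OF add_adm[OF q ql]] by blast
  define t where "t = int (card Ox) + int (card Iw)"
  define c where "c = int (card (Ox \<inter> Iw))"
  have s1: "t - 3 * c - int aa + 1 \<le> -1" using cnt lt unfolding t_def c_def by linarith
  have bn: "bb < n" using bb_lt .
  have an: "aa \<le> n" using ab bn by simp
  have lowO: "int (card Ox) \<ge> int aa - 1"
  proof -
    have "card {z. z < n \<and> 0 < cdist n x z \<and> cdist n x z < aa} \<le> card Ox"
      using add_O_lower[OF q ql] fO unfolding Ox_def by (rule card_mono[rotated])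
    then show ?thesis using cnt1[OF wx(2) an] by linarith
  qed
  have c_ne: "Ox \<inter> Iw \<noteq> {}"
  proof
    assume "Ox \<inter> Iw = {}"
    then have "c = 0" unfolding c_def by simp
    then show False using ar6[OF _ t_def lowO] s1 by simp
  qed
  have exact: "Ox \<union> Iw = arcset x w" using add_C_exact[OF q ql] c_ne unfolding Ox_def Iw_def by blast
  have ca: "card (arcset x w) = n - aa - 1" using card_arcset[of x w] wx xw_len[OF q ql] by simp
  have ie: "card (Ox \<union> Iw) + card (Ox \<inter> Iw) = card Ox + card Iw" using card_Un_Int fO fI by metis
  have aa1: "1 \<le> aa" using ql cd_pos wx by fastforce
  have "aa < n" using ab bn by simp
  have A: "int (card (Ox \<union> Iw)) = int n - int aa - 1" using exact ca aa1 \<open>aa < n\<close> by simp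
  have teq: "t = int (card (Ox \<union> Iw)) + c" using ie unfolding t_def c_def by linarith
  have key: "3 * int n - 4 * int aa - 1 \<le> 2 * t" using ar5[OF s1 teq A] .
  have upO: "card Ox \<le> (if LI x then bb else bb - 1)"
  proof -
    have "Ox \<subseteq> {z. z < n \<and> 0 < cdist n x z \<and> cdist n x z < (if LI x then bb + 1 else bb)}"
    proof
      fix z assume "z \<in> Ox"
      then have xz: "(x, z) \<in> E" unfolding Ox_def by simp
      then have z: "z < n" "z \<noteq> x" using Esub by auto
      have le: "cdist n x z \<le> bb" using edge_len xz .
      have "\<not> LI x \<Longrightarrow> cdist n x z \<noteq> bb"
        using xz unfolding longest_edge_def incident_def plen_def by auto
      then show "z \<in> {z. z < n \<and> 0 < cdist n x z \<and> cdist n x z < (if LI x then bb + 1 else bb)}"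
        using z le cd_pos[of x n z] wx by (auto split: if_splits)
    qed
    then have "card Ox \<le> card {z. z < n \<and> 0 < cdist n x z \<and> cdist n x z < (if LI x then bb + 1 else bb)}"
      by (rule card_mono[rotated]) auto
    moreover have "(if LI x then bb + 1 else bb) \<le> n" using bn by auto
    ultimately show ?thesis using cnt1[OF wx(2)] by (auto split: if_splits)
  qed
  have upI: "card Iw \<le> (if LI w then bb else bb - 1)"
  proof -
    have "Iw \<subseteq> {z. z < n \<and> 0 < cdist n z w \<and> cdist n z w < (if LI w then bb + 1 else bb)}"
    proof
      fix z assume "z \<in> Iw"
      then have zw: "(z, w) \<in> E" unfolding Iw_def by simp
      then have z: "z < n" "z \<noteq> w" using Esub by auto
      have le: "cdist n z w \<le> bb" using edge_len zw .
      have "\<not> LI w \<Longrightarrow> cdist n z w \<noteq> bb"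
        using zw unfolding longest_edge_def incident_def plen_def by auto
      then show "z \<in> {z. z < n \<and> 0 < cdist n z w \<and> cdist n z w < (if LI w then bb + 1 else bb)}"
        using z le cd_pos[of z n w] wx by (auto split: if_splits)
    qed
    then have "card Iw \<le> card {z. z < n \<and> 0 < cdist n z w \<and> cdist n z w < (if LI w then bb + 1 else bb)}"
      by (rule card_mono[rotated]) auto
    moreover have "(if LI w then bb + 1 else bb) \<le> n" using bn by auto
    ultimately show ?thesis using cnt1'[OF wx(1)] by (auto split: if_splits)
  qed
  have b1: "1 \<le> bb" using ab by simp
  have t2: "t \<le> 2 * int bb" using upO upI unfolding t_def by (auto split: if_splits)
  have r1: "3 * int n - 1 \<le> 4 * (int aa + int bb)" using ar7[OF key t2] .
  have r2: "(\<not> LI w \<or> \<not> LI x) \<longrightarrow> 3 * int n + 1 \<le> 4 * (int aa + int bb)"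
  proof
    assume "\<not> LI w \<or> \<not> LI x"
    then have "t \<le> 2 * int bb - 1" using upO upI b1 unfolding t_def by (auto split: if_splits)
    then show "3 * int n + 1 \<le> 4 * (int aa + int bb)" using ar8[OF key] by blast
  qed
  show ?thesis using r1 r2 by blast
qed

end



theorem mainTheorem9:
  fixes n :: nat and E :: "(nat \<times> nat) set" and \<gamma> :: int
  assumes "n \<ge> 4"
    and "optimal n E"
    and "enat (betaG n E) > alphaG n E"
    and "\<gamma> = 4 * (int (the_enat (alphaG n E)) + int (betaG n E)) - 3 * int n"
  shows "-1 \<le> \<gamma> \<and> \<gamma> \<le> 1
    \<and> ((\<exists>x<n. (\<exists>p. longest_edge n E p \<and> incident x p)
              \<and> \<not> (\<exists>q. shortest_nonedge n E q \<and> incident x q)) \<longrightarrow> \<gamma> = -1)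
    \<and> ((\<exists>x<n. (\<exists>q. shortest_nonedge n E q \<and> incident x q)
              \<and> \<not> (\<exists>p. longest_edge n E p \<and> incident x p)) \<longrightarrow> \<gamma> = 1)"
proof -
  interpret OPT n E
    using assms(1,2,3) by unfold_locales (auto simp: optimal_def)
  have g: "\<gamma> = 4 * (int aa + int bb) - 3 * int n" using assms(4) by simp
  obtain w x where q: "(w, x) \<in> nonedges n E" "cdist n w x = aa" using ex_short by blast
  obtain u v where e: "(u, v) \<in> E" "cdist n u v = bb" using ex_long by blast
  have lo: "-1 \<le> \<gamma>" using add_final[OF q] g by linarith
  have hi: "\<gamma> \<le> 1" using del_final[OF e] g by linarith
  have c3: "(\<exists>y<n. LI y \<and> \<not> SI y) \<longrightarrow> \<gamma> = -1"
  proof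
    assume "\<exists>y<n. LI y \<and> \<not> SI y"
    then obtain y p where y: "longest_edge n E p" "incident y p" "\<not> SI y" by blast
    obtain p1 p2 where p: "p = (p1, p2)" by (cases p) auto
    have pe: "(p1, p2) \<in> E" "cdist n p1 p2 = bb" using y(1) p unfolding longest_edge_def plen_def by auto
    have "\<not> SI p1 \<or> \<not> SI p2" using y(2,3) p unfolding incident_def by auto
    then have "4 * (int aa + int bb) \<le> 3 * int n - 1" using del_final[OF pe] by blast
    then have "\<gamma> \<le> -1" using g by linarith
    then show "\<gamma> = -1" using lo by simp
  qed
  have c4: "(\<exists>y<n. SI y \<and> \<not> LI y) \<longrightarrow> \<gamma> = 1"
  proof
    assume "\<exists>y<n. SI y \<and> \<not> LI y"
    then obtain y p where y: "shortest_nonedge n E p" "incident y p" "\<not> LI y" by blast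
    obtain p1 p2 where p: "p = (p1, p2)" by (cases p) auto
    have pe: "(p1, p2) \<in> nonedges n E" "cdist n p1 p2 = aa"
      using y(1) p alpha_eq unfolding shortest_nonedge_def plen_def by (auto simp del: enat.inject) (metis enat.inject)
    have "\<not> LI p1 \<or> \<not> LI p2" using y(2,3) p unfolding incident_def by auto
    then have "3 * int n + 1 \<le> 4 * (int aa + int bb)" using add_final[OF pe] by blast
    then have "\<gamma> \<ge> 1" using g by linarith
    then show "\<gamma> = 1" using hi by simp
  qed
  show ?thesis using lo hi c3 c4 by blast
qed



end
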